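(* (i) A graph $G$ is $2$-$\chi_\rho$-critical if and only if $G \cong K_2$. (ii) A graph $G$ is $3$-$\chi_\rho$-critical if and only if $G \in \{C_3, P_4\}$ (up to isomorphism).
   Context: Graphs are finite and simple. A $k$-packing coloring of $G$ is a map $c:V(G)\to\{1,\ldots,k\}$ such that two distinct vertices $u,v$ with $c(u)=c(v)=i$ satisfy $d_G(u,v)>i$ (distance between vertices in different components is infinite); $\chi_\rho(G)$ is the smallest $k$ for which such a coloring exists. $G$ is $\chi_\rho$-critical if $\chi_\rho(H)<\chi_\rho(G)$ for every proper subgraph $H$ of $G$, and $k$-$\chi_\rho$-critical if moreover $\chi_\rho(G)=k$. $C_n$ is the cycle and $P_n$ the path on $n$ vertices. *)

theory Defs
  imports Main "HOL-Library.Extended_Nat"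
begin

type_synonym 'a graph = "'a set \<times> 'a set set"

definition verts :: "'a graph \<Rightarrow> 'a set" where "verts G = fst G"
definition edges :: "'a graph \<Rightarrow> 'a set set" where "edges G = snd G"

definition graph :: "'a graph \<Rightarrow> bool" where
  "graph G \<longleftrightarrow> finite (verts G) \<and>
     (\<forall>e\<in>edges G. \<exists>u v. e = {u, v} \<and> u \<noteq> v \<and> u \<in> verts G \<and> v \<in> verts G)"

definition walk :: "'a graph \<Rightarrow> 'a list \<Rightarrow> bool" where
  "walk G p \<longleftrightarrow> p \<noteq> [] \<and> set p \<subseteq> verts G \<and>
     (\<forall>i < length p - 1. {p ! i, p ! Suc i} \<in> edges G)"

text \<open>Distance; infinite (top of enat) if there is no walk.\<close>
definition dist :: "'a graph \<Rightarrow> 'a \<Rightarrow> 'a \<Rightarrow> enat" where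
  "dist G u v = (INF p \<in> {p. walk G p \<and> hd p = u \<and> last p = v}. enat (length p - 1))"

definition packing_coloring :: "'a graph \<Rightarrow> nat \<Rightarrow> ('a \<Rightarrow> nat) \<Rightarrow> bool" where
  "packing_coloring G k c \<longleftrightarrow>
     (\<forall>v\<in>verts G. c v \<in> {1..k}) \<and>
     (\<forall>u\<in>verts G. \<forall>v\<in>verts G. u \<noteq> v \<and> c u = c v \<longrightarrow> dist G u v > enat (c u))"

definition chi_rho :: "'a graph \<Rightarrow> nat" where
  "chi_rho G = (LEAST k. \<exists>c. packing_coloring G k c)"

definition subgraph :: "'a graph \<Rightarrow> 'a graph \<Rightarrow> bool" where
  "subgraph H G \<longleftrightarrow> graph H \<and> verts H \<subseteq> verts G \<and> edges H \<subseteq> edges G"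

definition chi_rho_critical :: "'a graph \<Rightarrow> bool" where
  "chi_rho_critical G \<longleftrightarrow> graph G \<and>
     (\<forall>H. subgraph H G \<and> H \<noteq> G \<longrightarrow> chi_rho H < chi_rho G)"

definition k_chi_rho_critical :: "nat \<Rightarrow> 'a graph \<Rightarrow> bool" where
  "k_chi_rho_critical k G \<longleftrightarrow> chi_rho_critical G \<and> chi_rho G = k"

definition graph_iso :: "'a graph \<Rightarrow> 'b graph \<Rightarrow> bool" where
  "graph_iso G H \<longleftrightarrow> (\<exists>f. bij_betw f (verts G) (verts H) \<and>
     (\<forall>u\<in>verts G. \<forall>v\<in>verts G. {u, v} \<in> edges G \<longleftrightarrow> {f u, f v} \<in> edges H))"

definition K2 :: "nat graph" where "K2 = ({0, 1}, {{0, 1}})"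
definition C3 :: "nat graph" where "C3 = ({0, 1, 2}, {{0, 1}, {1, 2}, {0, 2}})"
definition P4 :: "nat graph" where "P4 = ({0, 1, 2, 3}, {{0, 1}, {1, 2}, {2, 3}})"

end

theory Submission
  imports Defs
begin

definition adj :: "'a graph \<Rightarrow> 'a \<Rightarrow> 'a \<Rightarrow> bool" where "adj G u v \<longleftrightarrow> {u,v} \<in> edges G"

lemma adj_sym: "adj G u v \<longleftrightarrow> adj G v u" by (simp add: adj_def insert_commute)

lemma adj_irr: "graph G \<Longrightarrow> adj G u u \<Longrightarrow> False"
  unfolding graph_def adj_def by (metis doubleton_eq_iff insert_absorb2)

lemma adj_verts: "graph G \<Longrightarrow> adj G u v \<Longrightarrow> u \<in> verts G \<and> v \<in> verts G"
  unfolding graph_def adj_def by (metis doubleton_eq_iff)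

lemma dist_le: "walk G p \<Longrightarrow> hd p = u \<Longrightarrow> last p = v \<Longrightarrow> dist G u v \<le> enat (length p - 1)"
  unfolding dist_def by (rule INF_lower) auto

lemma dist_ge: "(\<And>p. walk G p \<Longrightarrow> hd p = u \<Longrightarrow> last p = v \<Longrightarrow> n \<le> length p - 1) \<Longrightarrow> enat n \<le> dist G u v"
  unfolding dist_def by (rule INF_greatest) auto

lemma walk2: "graph G \<Longrightarrow> adj G u v \<Longrightarrow> walk G [u,v]"
  using adj_verts[of G u v] by (auto simp: walk_def adj_def)

lemma walk3: "graph G \<Longrightarrow> adj G u v \<Longrightarrow> adj G v w \<Longrightarrow> walk G [u,v,w]"
  using adj_verts[of G u v] adj_verts[of G v w] by (auto simp: walk_def adj_def less_Suc_eq nth_Cons')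

lemma len1: "length p = 1 \<Longrightarrow> \<exists>x. p = [x]"
  by (cases p) auto
lemma len2: "length p = 2 \<Longrightarrow> \<exists>x y. p = [x,y]"
  by (cases p; cases "tl p") auto
lemma len3: "length p = 3 \<Longrightarrow> \<exists>x y z. p = [x,y,z]"
  by (cases p; cases "tl p"; cases "tl (tl p)") auto

lemma dist_gt1: assumes "u \<noteq> v" "\<not> adj G u v" shows "enat 1 < dist G u v"
proof -
  have "enat 2 \<le> dist G u v"
  proof (rule dist_ge)
    fix p assume w: "walk G p" "hd p = u" "last p = v"
    show "2 \<le> length p - 1"
    proof (rule ccontr)
      assume "\<not> ?thesis"
      moreover have "0 < length p" using w(1) by (auto simp: walk_def)
      ultimately have "length p = 1 \<or> length p = 2 \<or> length p = 3" by arith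
      thus False
      proof (elim disjE)
        assume "length p = 1" then obtain x where "p = [x]" using len1 by blast
        thus False using w assms by auto
      next
        assume "length p = 2" then obtain x y where "p = [x,y]" using len2 by blast
        thus False using w assms by (auto simp: walk_def adj_def)
      next
        assume "length p = 3" then show False using \<open>\<not> 2 \<le> length p - 1\<close> by simp
      qed
    qed
  qed
  moreover have "enat 1 < enat 2" by simp
  ultimately show ?thesis by (rule order_less_le_trans[rotated])
qed

lemma dist_gt2: assumes "u \<noteq> v" "\<not> adj G u v" "\<And>w. adj G u w \<Longrightarrow> adj G w v \<Longrightarrow> False"
  shows "enat 2 < dist G u v"
proof -
  have "enat 3 \<le> dist G u v"
  proof (rule dist_ge)
    fix p assume w: "walk G p" "hd p = u" "last p = v"
    show "3 \<le> length p - 1"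
    proof (rule ccontr)
      assume "\<not> ?thesis"
      moreover have "0 < length p" using w(1) by (auto simp: walk_def)
      ultimately have "length p = 1 \<or> length p = 2 \<or> length p = 3" by arith
      thus False
      proof (elim disjE)
        assume "length p = 1" then obtain x where "p = [x]" using len1 by blast
        thus False using w assms by auto
      next
        assume "length p = 2" then obtain x y where "p = [x,y]" using len2 by blast
        thus False using w assms by (auto simp: walk_def adj_def)
      next
        assume "length p = 3" then obtain x y z where p: "p = [x,y,z]" using len3 by blast
        have "{x,y} \<in> edges G" "{y,z} \<in> edges G" using w(1) unfolding p walk_def
          by (auto dest: spec[of _ 0] spec[of _ 1])
        thus False using w assms(3)[of y] p by (auto simp: adj_def)
      qed
    qed
  qed
  moreover have "enat 2 < enat 3" by simp
  ultimately show ?thesis by (rule order_less_le_trans[rotated])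
qed

definition has_tri :: "'a graph \<Rightarrow> bool" where
  "has_tri G \<longleftrightarrow> (\<exists>a b c. a \<noteq> b \<and> b \<noteq> c \<and> a \<noteq> c \<and> adj G a b \<and> adj G b c \<and> adj G a c)"
definition has_p4 :: "'a graph \<Rightarrow> bool" where
  "has_p4 G \<longleftrightarrow> (\<exists>a b c d. distinct [a,b,c,d] \<and> adj G a b \<and> adj G b c \<and> adj G c d)"

lemma pc_mono: "packing_coloring G k c \<Longrightarrow> k \<le> k' \<Longrightarrow> packing_coloring G k' c"
  unfolding packing_coloring_def by auto

lemma col_exists: assumes "graph G" shows "\<exists>k c. packing_coloring G k c"
proof -
  have "finite (verts G)" using assms by (simp add: graph_def)
  from finite_imp_inj_to_nat_seg[OF this] obtain f :: "'a \<Rightarrow> nat" and n :: nat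
    where f: "f ` verts G = {i. i < n}" "inj_on f (verts G)" by blast
  have fl: "f v < n" if "v \<in> verts G" for v using f(1) that by blast
  have "packing_coloring G n (\<lambda>v. Suc (f v))"
    unfolding packing_coloring_def using f fl by (auto simp: inj_on_def Suc_le_eq)
  thus ?thesis by blast
qed

lemma chi_le: "packing_coloring G k c \<Longrightarrow> chi_rho G \<le> k"
  unfolding chi_rho_def by (rule Least_le) blast

lemma chi_col: "graph G \<Longrightarrow> \<exists>c. packing_coloring G (chi_rho G) c"
proof -
  assume "graph G"
  then obtain k c where "packing_coloring G k c" using col_exists by blast
  hence "\<exists>c. packing_coloring G k c" by blast
  thus ?thesis unfolding chi_rho_def by (rule LeastI)
qed

lemma chi_ge: assumes "graph G" "\<And>c. \<not> packing_coloring G k c" shows "k < chi_rho G"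
proof (rule ccontr)
  assume "\<not> k < chi_rho G"
  then obtain c where "packing_coloring G (chi_rho G) c" using chi_col assms(1) by blast
  hence "packing_coloring G k c" using pc_mono \<open>\<not> k < chi_rho G\<close> by fastforce
  thus False using assms(2) by blast
qed

lemma pc_adj: assumes "packing_coloring G k c" "adj G u v" "graph G"
  shows "c u \<noteq> c v"
proof
  assume e: "c u = c v"
  have uv: "u \<noteq> v" using adj_irr assms by metis
  have vs: "u \<in> verts G" "v \<in> verts G" using adj_verts assms by metis+
  have "dist G u v \<le> enat 1" using dist_le[OF walk2[OF assms(3,2)] refl refl] by simp
  moreover have "enat (c u) < dist G u v" using assms(1) e uv vs unfolding packing_coloring_def by blast
  moreover have "c u \<ge> 1" using assms(1) vs unfolding packing_coloring_def by auto
  ultimately show False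
    by (metis enat_ord_simps(1) leD order_le_less_trans)
qed

lemma tri_no2: assumes "graph G" "has_tri G" shows "\<not> packing_coloring G 2 c"
proof
  assume p: "packing_coloring G 2 c"
  obtain a b d where t: "adj G a b" "adj G b d" "adj G a d" using assms(2) unfolding has_tri_def by blast
  have "a \<in> verts G" "b \<in> verts G" "d \<in> verts G" using adj_verts t assms(1) by metis+
  hence "c a \<in> {1..2}" "c b \<in> {1..2}" "c d \<in> {1..2}" using p unfolding packing_coloring_def by blast+
  moreover have "c a \<noteq> c b" "c b \<noteq> c d" "c a \<noteq> c d" using pc_adj p t assms(1) by metis+
  ultimately show False by auto
qed

lemma p4_no2: assumes "graph G" "has_p4 G" shows "\<not> packing_coloring G 2 c"
proof
  assume p: "packing_coloring G 2 c"
  obtain a b x d where t: "distinct [a,b,x,d]" "adj G a b" "adj G b x" "adj G x d"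
    using assms(2) unfolding has_p4_def by blast
  have vs: "a \<in> verts G" "b \<in> verts G" "x \<in> verts G" "d \<in> verts G" using adj_verts t assms(1) by metis+
  hence "c a \<in> {1..2}" "c b \<in> {1..2}" "c x \<in> {1..2}" "c d \<in> {1..2}" using p unfolding packing_coloring_def by blast+
  moreover have "c a \<noteq> c b" "c b \<noteq> c x" "c x \<noteq> c d" using pc_adj p t assms(1) by metis+
  ultimately have "(c a = 2 \<and> c x = 2) \<or> (c b = 2 \<and> c d = 2)" by auto
  thus False
  proof
    assume h: "c a = 2 \<and> c x = 2"
    have "dist G a x \<le> enat 2" using dist_le[OF walk3[OF assms(1) t(2,3)] refl refl] by (simp add: numeral_2_eq_2)
    moreover have "enat (c a) < dist G a x" using p h t(1) vs unfolding packing_coloring_def by auto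
    ultimately show False using h by simp
  next
    assume h: "c b = 2 \<and> c d = 2"
    have "dist G b d \<le> enat 2" using dist_le[OF walk3[OF assms(1) t(3,4)] refl refl] by (simp add: numeral_2_eq_2)
    moreover have "enat (c b) < dist G b d" using p h t(1) vs unfolding packing_coloring_def by auto
    ultimately show False using h by simp
  qed
qed

lemma star_col:
  assumes g: "graph G" and nt: "\<not> has_tri G" and np: "\<not> has_p4 G"
  shows "\<exists>c. packing_coloring G 2 c"
proof -
  have irr: "\<not> adj G u u" for u using adj_irr g by metis
  have key: "z = v" if "adj G v x" "adj G v y" "x \<noteq> y" "adj G x z" for v x y z
  proof (rule ccontr)
    assume zv: "z \<noteq> v"
    have d: "v \<noteq> x" "v \<noteq> y" "x \<noteq> z" using irr that by metis+
    show False
    proof (cases "z = y")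
      case True
      thus False using nt d that unfolding has_tri_def by (metis adj_sym)
    next
      case False
      have "distinct [z,x,v,y]" using d zv False that(3) by auto
      thus False using np that unfolding has_p4_def by (metis adj_sym)
    qed
  qed
  define cen where "cen v \<longleftrightarrow> (\<exists>x y. x \<noteq> y \<and> adj G v x \<and> adj G v y) \<or>
     (\<exists>w. adj G v w \<and> (\<forall>z. adj G v z \<longrightarrow> z = w) \<and> (\<forall>z. adj G w z \<longrightarrow> z = v) \<and> v = (SOME x. x \<in> {v,w}))" for v
  define c where "c v = (if cen v then 2 else 1::nat)" for v
  have c1: "\<not> adj G u v" if "\<not> cen u" "\<not> cen v" "u \<noteq> v" for u v
  proof
    assume a: "adj G u v"
    have nu: "\<forall>z. adj G u z \<longrightarrow> z = v" using that(1) a unfolding cen_def by blast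
    have nv: "\<forall>z. adj G v z \<longrightarrow> z = u" using that(2) a adj_sym unfolding cen_def by metis
    have s: "(SOME x. x \<in> {u,v}) \<in> {u,v}" by (rule someI) auto
    have "{v,u} = {u,v}" by auto
    thus False using s that nu nv a adj_sym unfolding cen_def by (metis insertE singletonD)
  qed
  have c2a: "\<not> adj G u v" if "cen u" "cen v" "u \<noteq> v" for u v
  proof
    assume a: "adj G u v"
    have sy: "{v,u} = {u,v}" by auto
    show False
    proof (cases "\<exists>x. adj G u x \<and> x \<noteq> v")
      case True
      then obtain x where x: "adj G u x" "x \<noteq> v" by blast
      have nv: "\<forall>z. adj G v z \<longrightarrow> z = u" using key[OF a x(1)] x(2) by metis
      show False using that(2) nv x unfolding cen_def by metis
    next
      case False
      hence nu: "\<forall>z. adj G u z \<longrightarrow> z = v" by blast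
      hence u: "u = (SOME x. x \<in> {u,v})" using that(1) a unfolding cen_def by metis
      have nv: "\<forall>z. adj G v z \<longrightarrow> z = u" using key nu a adj_sym that(1) unfolding cen_def
        by metis
      show False using that(2) nv u sy that(3) unfolding cen_def by metis
    qed
  qed
  have c2b: False if "cen u" "cen v" "u \<noteq> v" "adj G u w" "adj G w v" for u v w
  proof -
    have nu: "\<forall>z. adj G u z \<longrightarrow> z = w" using key that(3,4,5) adj_sym by metis
    show False using that(1,3,5) nu unfolding cen_def by metis
  qed
  have "packing_coloring G 2 c"
    unfolding packing_coloring_def
  proof (intro conjI ballI impI)
    fix v assume "v \<in> verts G" show "c v \<in> {1..2}" by (simp add: c_def)
  next
    fix u v assume uv: "u \<in> verts G" "v \<in> verts G" "u \<noteq> v \<and> c u = c v"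
    show "enat (c u) < dist G u v"
    proof (cases "cen u")
      case True
      hence "cen v" using uv by (auto simp: c_def split: if_splits)
      hence "enat 2 < dist G u v" using dist_gt2[of u v G] c2a c2b True uv by metis
      thus ?thesis using True by (simp add: c_def)
    next
      case False
      hence "\<not> cen v" using uv by (auto simp: c_def split: if_splits)
      hence "enat 1 < dist G u v" using dist_gt1[of u v G] c1 False uv by metis
      thus ?thesis using False by (simp add: c_def)
    qed
  qed
  thus ?thesis by blast
qed


lemma G_eq: "verts H = verts G \<Longrightarrow> edges H = edges G \<Longrightarrow> H = G"
  by (simp add: verts_def edges_def prod_eq_iff)

lemma vE[simp]: "verts (V, E) = V" "edges (V, E) = E" by (simp_all add: verts_def edges_def)

lemma edgeless_col: "edges G = {} \<Longrightarrow> packing_coloring G 1 (\<lambda>_. 1)"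
  unfolding packing_coloring_def using dist_gt1[of _ _ G] by (auto simp: adj_def)

lemma iso_extract:
  assumes "graph G" "graph_iso G H" "graph H"
  shows "\<exists>g. bij_betw g (verts H) (verts G) \<and> verts G = g ` verts H \<and>
           edges G = (\<lambda>e. g ` e) ` edges H \<and> inj_on g (verts H)"
proof -
  obtain f where f: "bij_betw f (verts G) (verts H)"
    "\<forall>u\<in>verts G. \<forall>v\<in>verts G. {u, v} \<in> edges G \<longleftrightarrow> {f u, f v} \<in> edges H"
    using assms(2) unfolding graph_iso_def by blast
  define g where "g = inv_into (verts G) f"
  have gb: "bij_betw g (verts H) (verts G)" unfolding g_def by (rule bij_betw_inv_into[OF f(1)])
  have fg: "f (g x) = x" if "x \<in> verts H" for x
    unfolding g_def using f(1) that by (meson bij_betw_inv_into_right)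
  have gf: "g (f x) = x" if "x \<in> verts G" for x
    unfolding g_def using f(1) that by (meson bij_betw_inv_into_left)
  have gi: "g x \<in> verts G" if "x \<in> verts H" for x using gb that bij_betwE by blast
  have fi: "f x \<in> verts H" if "x \<in> verts G" for x using f(1) that bij_betwE by blast
  have ge: "{x,y} \<in> edges H \<longleftrightarrow> {g x, g y} \<in> edges G" if "x \<in> verts H" "y \<in> verts H" for x y
    using f(2) gi[OF that(1)] gi[OF that(2)] fg that by metis
  have "edges G = (\<lambda>e. g ` e) ` edges H"
  proof
    show "edges G \<subseteq> (\<lambda>e. g ` e) ` edges H"
    proof
      fix e assume e: "e \<in> edges G"
      then obtain x y where xy: "e = {x,y}" "x \<in> verts G" "y \<in> verts G"
        using assms(1) unfolding graph_def by blast
      have "{f x, f y} \<in> edges H" using f(2) xy e by blast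
      moreover have "e = g ` {f x, f y}" using xy gf by auto
      ultimately show "e \<in> (\<lambda>e. g ` e) ` edges H" by blast
    qed
  next
    show "(\<lambda>e. g ` e) ` edges H \<subseteq> edges G"
    proof
      fix e assume "e \<in> (\<lambda>e. g ` e) ` edges H"
      then obtain e' where e': "e' \<in> edges H" "e = g ` e'" by blast
      have "finite (verts G)" using assms(1) unfolding graph_def by blast
      show "e \<in> edges G" 
      proof (cases "\<exists>x y. e' = {x,y} \<and> x \<in> verts H \<and> y \<in> verts H")
        case True
        then obtain x y where "e' = {x,y}" "x \<in> verts H" "y \<in> verts H" by blast
        thus ?thesis using ge e' by auto
      next
        case False
        show ?thesis using assms(3) False e' unfolding graph_def by blast
      qed
    qed
  qed
  moreover have "verts G = g ` verts H" using gb bij_betw_imp_surj_on by metis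
  moreover have "inj_on g (verts H)" using gb by (rule bij_betw_imp_inj_on)
  ultimately show ?thesis using gb by (intro exI[of _ g] conjI)
qed

lemma graph_K2: "graph K2" by (auto simp: graph_def K2_def)
lemma graph_C3: "graph C3"
  unfolding graph_def C3_def vE
proof (intro conjI ballI)
  show "finite {0,1,2::nat}" by simp
  fix e assume "e \<in> {{0,1},{1,2},{0,2::nat}}"
  thus "\<exists>u v. e = {u,v} \<and> u \<noteq> v \<and> u \<in> {0,1,2} \<and> v \<in> {0,1,2}" by (elim insertE emptyE) fastforce+
qed
lemma graph_P4: "graph P4"
  unfolding graph_def P4_def vE
proof (intro conjI ballI)
  show "finite {0,1,2,3::nat}" by simp
  fix e assume "e \<in> {{0,1},{1,2},{2,3::nat}}"
  thus "\<exists>u v. e = {u,v} \<and> u \<noteq> v \<and> u \<in> {0,1,2,3} \<and> v \<in> {0,1,2,3}" by (elim insertE emptyE) fastforce+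
qed

lemma K2_form: assumes "graph G" "graph_iso G K2"
  shows "\<exists>u v. u \<noteq> v \<and> G = ({u,v},{{u,v}})"
proof -
  obtain g where g: "verts G = g ` verts K2" "edges G = (\<lambda>e. g ` e) ` edges K2" "inj_on g (verts K2)"
    using iso_extract[OF assms graph_K2] by blast
  have "g 0 \<noteq> g 1" using g(3) unfolding K2_def inj_on_def by auto
  moreover have "G = ({g 0, g 1}, {{g 0, g 1}})" using g by (auto simp: K2_def verts_def edges_def prod_eq_iff)
  ultimately show ?thesis by blast
qed

lemma C3_form: assumes "graph G" "graph_iso G C3"
  shows "\<exists>a b c. distinct [a,b,c] \<and> G = ({a,b,c},{{a,b},{b,c},{a,c}})"
proof -
  obtain g where g: "verts G = g ` verts C3" "edges G = (\<lambda>e. g ` e) ` edges C3" "inj_on g (verts C3)"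
    using iso_extract[OF assms graph_C3] by blast
  have "distinct [g 0, g 1, g 2]" using g(3) unfolding C3_def inj_on_def by auto
  moreover have "G = ({g 0, g 1, g 2}, {{g 0, g 1}, {g 1, g 2}, {g 0, g 2}})" using g by (auto simp: C3_def verts_def edges_def prod_eq_iff)
  ultimately show ?thesis by blast
qed

lemma P4_form: assumes "graph G" "graph_iso G P4"
  shows "\<exists>a b c d. distinct [a,b,c,d] \<and> G = ({a,b,c,d},{{a,b},{b,c},{c,d}})"
proof -
  obtain g where g: "verts G = g ` verts P4" "edges G = (\<lambda>e. g ` e) ` edges P4" "inj_on g (verts P4)"
    using iso_extract[OF assms graph_P4] by blast
  have "distinct [g 0, g 1, g 2, g 3]" using g(3) unfolding P4_def inj_on_def by auto
  moreover have "G = ({g 0, g 1, g 2, g 3}, {{g 0, g 1}, {g 1, g 2}, {g 2, g 3}})" using g by (auto simp: P4_def verts_def edges_def prod_eq_iff)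
  ultimately show ?thesis by blast
qed

lemma K2_iso: "u \<noteq> v \<Longrightarrow> graph_iso ({u,v},{{u,v}}) K2"
  unfolding graph_iso_def K2_def
  by (rule exI[of _ "\<lambda>x. if x = u then 0 else 1"]) (auto simp: bij_betw_def inj_on_def doubleton_eq_iff)

lemma C3_iso: "distinct [a,b,c] \<Longrightarrow> graph_iso ({a,b,c},{{a,b},{b,c},{a,c}}) C3"
  unfolding graph_iso_def C3_def
  by (rule exI[of _ "\<lambda>x. if x = a then 0 else if x = b then 1 else 2"]) (auto simp: bij_betw_def inj_on_def doubleton_eq_iff)

lemma P4_iso: "distinct [a,b,c,d] \<Longrightarrow> graph_iso ({a,b,c,d},{{a,b},{b,c},{c,d}}) P4"
  unfolding graph_iso_def P4_def
  by (rule exI[of _ "\<lambda>x. if x = a then 0 else if x = b then 1 else if x = c then 2 else 3"]) (auto simp: bij_betw_def inj_on_def doubleton_eq_iff)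


lemma card3_eq: assumes "card (edges G) = 3" "distinct [e1,e2,e3]" "{e1,e2,e3} \<subseteq> edges H" "edges H \<subseteq> edges G"
  shows "edges H = edges G"
proof -
  have fin: "finite (edges G)" using assms(1) card.infinite by fastforce
  have "card {e1,e2,e3} = 3" using assms(2) by simp
  hence "{e1,e2,e3} = edges G" by (intro card_subset_eq[OF fin]) (use assms in auto)
  thus ?thesis using assms by auto
qed

lemma crit3_gen:
  assumes g: "graph G" and tp: "has_tri G \<or> has_p4 G" and col: "packing_coloring G 3 c"
    and card: "card (edges G) = 3" and cov: "\<forall>x\<in>verts G. \<exists>y. adj G x y"
  shows "k_chi_rho_critical 3 G"
proof -
  have c3: "chi_rho G = 3"
  proof -
    have "chi_rho G \<le> 3" using chi_le col by blast
    moreover have "2 < chi_rho G" using chi_ge[OF g] tri_no2 p4_no2 tp g by metis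
    ultimately show ?thesis by simp
  qed
  have "chi_rho H < chi_rho G" if s: "subgraph H G" "H \<noteq> G" for H
  proof (rule ccontr)
    assume "\<not> chi_rho H < chi_rho G"
    have gH: "graph H" using s unfolding subgraph_def by blast
    have "has_tri H \<or> has_p4 H"
    proof (rule ccontr)
      assume "\<not> (has_tri H \<or> has_p4 H)"
      then obtain c' where "packing_coloring H 2 c'" using star_col gH by blast
      hence "chi_rho H \<le> 2" using chi_le by blast
      thus False using c3 \<open>\<not> chi_rho H < chi_rho G\<close> by simp
    qed
    hence eH: "edges H = edges G"
    proof
      assume "has_tri H"
      then obtain a b d where t: "a \<noteq> b" "b \<noteq> d" "a \<noteq> d" "adj H a b" "adj H b d" "adj H a d"
        unfolding has_tri_def by blast
      show ?thesis
        by (rule card3_eq[OF card, of "{a,b}" "{b,d}" "{a,d}"])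
           (use t s in \<open>auto simp: adj_def subgraph_def doubleton_eq_iff\<close>)
    next
      assume "has_p4 H"
      then obtain a b x d where t: "distinct [a,b,x,d]" "adj H a b" "adj H b x" "adj H x d"
        unfolding has_p4_def by blast
      show ?thesis
        by (rule card3_eq[OF card, of "{a,b}" "{b,x}" "{x,d}"])
           (use t s in \<open>auto simp: adj_def subgraph_def doubleton_eq_iff\<close>)
    qed
    have "verts G \<subseteq> verts H"
    proof
      fix x assume "x \<in> verts G"
      then obtain y where "adj G x y" using cov by blast
      hence "adj H x y" using eH by (simp add: adj_def)
      thus "x \<in> verts H" using adj_verts[OF gH] by blast
    qed
    hence "verts H = verts G" using s unfolding subgraph_def by blast
    hence "H = G" using eH by (rule G_eq)
    thus False using s by blast
  qed
  thus ?thesis using c3 g unfolding k_chi_rho_critical_def unfolding chi_rho_critical_def by blast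
qed

lemma C3_crit: assumes "distinct [a,b,c]" shows "k_chi_rho_critical 3 ({a,b,c},{{a,b},{b,c},{a,c}})"
proof (rule crit3_gen)
  let ?G = "({a,b,c},{{a,b},{b,c},{a,c}})"
  show "graph ?G" using assms by (auto simp: graph_def)
  show "has_tri ?G \<or> has_p4 ?G" using assms unfolding has_tri_def adj_def by auto
  show "packing_coloring ?G 3 (\<lambda>x. if x = a then 1 else if x = b then 2 else 3)"
    using assms unfolding packing_coloring_def by auto
  show "card (edges ?G) = 3" using assms by (auto simp: card_insert_if doubleton_eq_iff)
  have "adj ?G a b" "adj ?G b c" "adj ?G c a" by (simp_all add: adj_def insert_commute)
  thus "\<forall>x\<in>verts ?G. \<exists>y. adj ?G x y" by (simp only: vE ball_simps) blast
qed

lemma P4_crit: assumes "distinct [a,b,c,d]" shows "k_chi_rho_critical 3 ({a,b,c,d},{{a,b},{b,c},{c,d}})"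
proof (rule crit3_gen)
  let ?G = "({a,b,c,d},{{a,b},{b,c},{c,d}})"
  show "graph ?G" using assms by (auto simp: graph_def)
  show "has_tri ?G \<or> has_p4 ?G" using assms unfolding has_p4_def adj_def by auto
  have na: "\<not> adj ?G a c" using assms by (auto simp: adj_def doubleton_eq_iff)
  have na2: "\<not> adj ?G c a" using na adj_sym by metis
  have "a \<noteq> c" using assms by auto
  hence "enat 1 < dist ?G a c" "enat 1 < dist ?G c a" using dist_gt1[OF _ na] dist_gt1[OF _ na2] by auto
  thus "packing_coloring ?G 3 (\<lambda>x. if x = a then 1 else if x = b then 2 else if x = c then 1 else 3)"
    using assms unfolding packing_coloring_def by auto
  show "card (edges ?G) = 3" using assms by (auto simp: card_insert_if doubleton_eq_iff)
  have "adj ?G a b" "adj ?G b c" "adj ?G c d" "adj ?G d c" by (simp_all add: adj_def insert_commute)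
  thus "\<forall>x\<in>verts ?G. \<exists>y. adj ?G x y" by (simp only: vE ball_simps) blast
qed

lemma K2_crit: assumes "u \<noteq> v" shows "k_chi_rho_critical 2 ({u,v},{{u,v}})"
proof -
  let ?G = "({u,v},{{u,v}})"
  have g: "graph ?G" using assms by (auto simp: graph_def)
  have c2: "chi_rho ?G = 2"
  proof -
    have "packing_coloring ?G 2 (\<lambda>x. if x = u then 1 else 2)"
      using assms unfolding packing_coloring_def by auto
    hence "chi_rho ?G \<le> 2" using chi_le by blast
    moreover have "1 < chi_rho ?G"
    proof (rule chi_ge[OF g])
      fix c show "\<not> packing_coloring ?G 1 c"
      proof
        assume p: "packing_coloring ?G 1 c"
        have "c u \<noteq> c v" using pc_adj[OF p _ g] by (simp add: adj_def)
        thus False using p unfolding packing_coloring_def by auto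
      qed
    qed
    ultimately show ?thesis by simp
  qed
  have "chi_rho H < chi_rho ?G" if s: "subgraph H ?G" "H \<noteq> ?G" for H
  proof (cases "edges H = {}")
    case True
    thus ?thesis using chi_le[OF edgeless_col[OF True]] c2 by simp
  next
    case False
    hence eH: "edges H = {{u,v}}" using s unfolding subgraph_def by auto
    hence "adj H u v" by (simp add: adj_def)
    moreover have "graph H" using s unfolding subgraph_def by blast
    ultimately have "u \<in> verts H \<and> v \<in> verts H" by (intro adj_verts)
    hence "verts H = {u,v}" using s unfolding subgraph_def by auto
    hence "H = ?G" using eH by (intro G_eq) simp_all
    thus ?thesis using s by blast
  qed
  thus ?thesis using c2 g unfolding k_chi_rho_critical_def unfolding chi_rho_critical_def by blast
qed


lemma crit2_fwd: assumes g: "graph G" and k: "k_chi_rho_critical 2 G" shows "graph_iso G K2"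
proof -
  have c2: "chi_rho G = 2" and cr: "\<And>H. subgraph H G \<Longrightarrow> H \<noteq> G \<Longrightarrow> chi_rho H < chi_rho G"
    using k unfolding k_chi_rho_critical_def chi_rho_critical_def by blast+
  have "edges G \<noteq> {}"
  proof
    assume "edges G = {}"
    thus False using chi_le[OF edgeless_col] c2 by fastforce
  qed
  then obtain e where e: "e \<in> edges G" by blast
  have "\<exists>u v. e = {u,v} \<and> u \<noteq> v \<and> u \<in> verts G \<and> v \<in> verts G"
    using g e unfolding graph_def by blast
  then obtain u v where uv0: "e = {u,v}" "u \<noteq> v" "u \<in> verts G" "v \<in> verts G" by blast
  hence uv: "{u,v} \<in> edges G" "u \<noteq> v" "u \<in> verts G" "v \<in> verts G" using e by simp_all
  let ?H = "({u,v},{{u,v}})"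
  have gH: "graph ?H" using uv by (auto simp: graph_def)
  have "1 < chi_rho ?H"
  proof (rule chi_ge[OF gH])
    fix c show "\<not> packing_coloring ?H 1 c"
    proof
      assume p: "packing_coloring ?H 1 c"
      have "c u \<noteq> c v" using pc_adj[OF p _ gH] by (simp add: adj_def)
      thus False using p unfolding packing_coloring_def by auto
    qed
  qed
  moreover have "subgraph ?H G" using gH uv by (auto simp: subgraph_def)
  ultimately have "?H = G" using cr c2 by fastforce
  thus ?thesis using K2_iso uv by metis
qed

lemma crit3_fwd: assumes g: "graph G" and k: "k_chi_rho_critical 3 G"
  shows "graph_iso G C3 \<or> graph_iso G P4"
proof -
  have c3: "chi_rho G = 3" and cr: "\<And>H. subgraph H G \<Longrightarrow> H \<noteq> G \<Longrightarrow> chi_rho H < chi_rho G"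
    using k unfolding k_chi_rho_critical_def chi_rho_critical_def by blast+
  have "has_tri G \<or> has_p4 G"
  proof (rule ccontr)
    assume "\<not> (has_tri G \<or> has_p4 G)"
    then obtain c where "packing_coloring G 2 c" using star_col g by blast
    thus False using chi_le c3 by fastforce
  qed
  thus ?thesis
  proof
    assume "has_tri G"
    then obtain a b d where t: "a \<noteq> b" "b \<noteq> d" "a \<noteq> d" "adj G a b" "adj G b d" "adj G a d"
      unfolding has_tri_def by blast
    let ?H = "({a,b,d},{{a,b},{b,d},{a,d}})"
    have gH: "graph ?H" using t by (auto simp: graph_def)
    have "has_tri ?H" using t unfolding has_tri_def adj_def by auto
    hence "2 < chi_rho ?H" using chi_ge[OF gH] tri_no2[OF gH] by blast
    moreover have "subgraph ?H G" using gH t adj_verts[OF g] by (auto simp: subgraph_def adj_def)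
    ultimately have "?H = G" using cr c3 by fastforce
    thus ?thesis using C3_iso[of a b d] t by auto
  next
    assume "has_p4 G"
    then obtain a b x d where t: "distinct [a,b,x,d]" "adj G a b" "adj G b x" "adj G x d"
      unfolding has_p4_def by blast
    let ?H = "({a,b,x,d},{{a,b},{b,x},{x,d}})"
    have gH: "graph ?H" using t by (auto simp: graph_def)
    have "has_p4 ?H" using t(1) unfolding has_p4_def adj_def
      by (intro exI[of _ a] exI[of _ b] exI[of _ x] exI[of _ d]) simp
    hence "2 < chi_rho ?H" using chi_ge[OF gH] p4_no2[OF gH] by blast
    moreover have "subgraph ?H G" using gH t adj_verts[OF g] by (auto simp: subgraph_def adj_def)
    ultimately have "?H = G" using cr c3 by fastforce
    thus ?thesis using P4_iso[of a b x d] t by auto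
  qed
qed

theorem proposition3p1:
  fixes G :: "'a graph"
  assumes "graph G"
  shows "(k_chi_rho_critical 2 G \<longleftrightarrow> graph_iso G K2) \<and>
         (k_chi_rho_critical 3 G \<longleftrightarrow> graph_iso G C3 \<or> graph_iso G P4)"
proof (intro conjI iffI)
  show "k_chi_rho_critical 2 G \<Longrightarrow> graph_iso G K2" using crit2_fwd assms by blast
  show "graph_iso G K2 \<Longrightarrow> k_chi_rho_critical 2 G" using K2_form[OF assms] K2_crit by metis
  show "k_chi_rho_critical 3 G \<Longrightarrow> graph_iso G C3 \<or> graph_iso G P4" using crit3_fwd assms by blast
  show "graph_iso G C3 \<or> graph_iso G P4 \<Longrightarrow> k_chi_rho_critical 3 G"
    using C3_form[OF assms] P4_form[OF assms] C3_crit P4_crit by metis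
qed

end
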